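(* For any prime number $p$ and any integer $n\ge 1$, $$r(p,n)=\frac{p^{2n-1}+p^{n+1}-p^{n-1}+p^2-p-1}{p^2-1}.$$
   Context: For a prime $p$ and $n\ge 1$, $r(p,n)$ denotes the number of orbits of the left action of $\mathrm{SL}(2,\mathbb{Z})$ on $(\mathbb{Z}_p\times\mathbb{Z}_p)^n$, where elements of $(\mathbb{Z}_p\times\mathbb{Z}_p)^n$ are viewed as $2\times n$ matrices over $\mathbb{Z}_p$ and a matrix in $\mathrm{SL}(2,\mathbb{Z})$ acts by left matrix multiplication with entries reduced modulo $p$. *)

theory Defs
  imports "HOL-Analysis.Analysis"
begin

definition SL2Z :: "(int^2^2) set" where
  "SL2Z = {A. det A = 1}"

text \<open>Elements of (Z_p x Z_p)^n, viewed as 2 x n matrices over Z_p: the i-th column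
  (i < n) is a vector in int^2 with entries in {0..<p}; columns i >= n are zero.\<close>
definition configs :: "nat \<Rightarrow> nat \<Rightarrow> (nat \<Rightarrow> int^2) set" where
  "configs p n = {v. (\<forall>i<n. \<forall>k. 0 \<le> v i $ k \<and> v i $ k < int p) \<and> (\<forall>i\<ge>n. v i = 0)}"

definition act :: "nat \<Rightarrow> int^2^2 \<Rightarrow> (nat \<Rightarrow> int^2) \<Rightarrow> (nat \<Rightarrow> int^2)" where
  "act p A v = (\<lambda>i. \<chi> k. (A *v v i) $ k mod int p)"

definition orbit :: "nat \<Rightarrow> (nat \<Rightarrow> int^2) \<Rightarrow> (nat \<Rightarrow> int^2) set" where
  "orbit p v = {act p A v | A. A \<in> SL2Z}"

definition r :: "nat \<Rightarrow> nat \<Rightarrow> nat" where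
  "r p n = card {orbit p v | v. v \<in> configs p n}"

end

theory Submission
  imports Defs
begin

definition m2 :: "int \<Rightarrow> int \<Rightarrow> int \<Rightarrow> int \<Rightarrow> int^2^2" where
  "m2 a b c d = (\<chi> i j. if i = 1 then (if j = 1 then a else b) else (if j = 1 then c else d))"

definition v2 :: "int \<Rightarrow> int \<Rightarrow> int^2" where
  "v2 a b = (\<chi> i. if i = 1 then a else b)"

lemma two_ne_one[simp]: "(2::2) \<noteq> 1" by simp

lemma m2_comp[simp]: "m2 a b c d $ 1 $ 1 = a" "m2 a b c d $ 1 $ 2 = b"
  "m2 a b c d $ 2 $ 1 = c" "m2 a b c d $ 2 $ 2 = d"
  by (simp_all add: m2_def)

lemma v2_comp[simp]: "v2 a b $ 1 = a" "v2 a b $ 2 = b"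
  by (simp_all add: v2_def)

lemma v2_eta: "x = v2 (x$1) (x$2)"
  by (simp add: vec_eq_iff forall_2)

lemma m2_eta: "A = m2 (A$1$1) (A$1$2) (A$2$1) (A$2$2)"
  by (simp add: vec_eq_iff forall_2)

lemma det_m2[simp]: "det (m2 a b c d) = a*d - b*c"
  by (simp add: det_2)

lemma mv_m2[simp]: "m2 a b c d *v v2 x y = v2 (a*x+b*y) (c*x+d*y)"
  by (simp add: vec_eq_iff forall_2 matrix_vector_mult_def sum_2)

lemma mm_m2[simp]: "m2 a b c d ** m2 a' b' c' d' = m2 (a*a'+b*c') (a*b'+b*d') (c*a'+d*c') (c*b'+d*d')"
  by (simp add: vec_eq_iff forall_2 matrix_matrix_mult_def sum_2)

lemma mat1_m2: "mat 1 = m2 1 0 0 1"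
  by (simp add: vec_eq_iff forall_2 mat_def)

lemma v2_eq_iff: "v2 a b = v2 c d \<longleftrightarrow> a = c \<and> b = d"
  by (auto simp: vec_eq_iff forall_2)

lemma zero_v2: "(0::int^2) = v2 0 0"
  by (simp add: vec_eq_iff forall_2)

lemma SL2Z_mult: "A \<in> SL2Z \<Longrightarrow> B \<in> SL2Z \<Longrightarrow> A ** B \<in> SL2Z"
  by (simp add: SL2Z_def det_mul)

lemma SL2Z_one: "mat 1 \<in> SL2Z"
  by (simp add: SL2Z_def det_I)

lemma SL2Z_inv: assumes "A \<in> SL2Z" shows "\<exists>B\<in>SL2Z. B ** A = mat 1"
proof -
  obtain a b c d where A: "A = m2 a b c d" using m2_eta by blast
  have "a*d - b*c = 1" using assms A by (simp add: SL2Z_def)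
  then show ?thesis
    by (intro bexI[of _ "m2 d (-b) (-c) a"]) (auto simp: A SL2Z_def mat1_m2 algebra_simps)
qed

lemma act_col: "act p A v i = (\<chi> k. (A *v v i) $ k mod int p)"
  by (simp add: act_def)

lemma two_cases: "(k::2) = 1 \<or> k = 2" by (rule exhaust_2)

lemma mod_vec: "((A::int^2^2) *v (\<chi> k. (y::int^2) $ k mod int p)) $ k mod int p = (A *v y) $ k mod int p"
proof -
  obtain a b c d where A: "A = m2 a b c d" using m2_eta by blast
  obtain x z where y: "y = v2 x z" using v2_eta by blast
  have e: "(\<chi> k. y $ k mod int p) = v2 (x mod p) (z mod p)"
    by (simp add: y vec_eq_iff forall_2)
  have l: "(a*(x mod m) + b*(z mod m)) mod m = (a*x+b*z) mod m" for a b x z m :: int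
    by (metis mod_add_eq mod_mult_right_eq)
  show ?thesis
    apply (subst e)
    using exhaust_2[of k] l by (auto simp: A y)
qed

lemma act_comp: "act p A (act p B v) = act p (A ** B) v"
  by (simp add: act_def vec_eq_iff mod_vec matrix_vector_mul_assoc)

lemma act_configs: assumes "p > 0" "v \<in> configs p n" shows "act p A v \<in> configs p n"
proof -
  have "\<forall>i\<ge>n. v i = 0" using assms(2) by (simp add: configs_def)
  then have "\<forall>i\<ge>n. (A *v v i) = 0" by simp
  then show ?thesis using assms unfolding configs_def act_def
    by (auto simp: vec_eq_iff simp del: matrix_vector_mult_0_right)
qed

lemma act_id: assumes "v \<in> configs p n" shows "act p (mat 1) v = v"
proof (rule ext)
  fix i
  show "act p (mat 1) v i = v i"
  proof (cases "i < n")
    case True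
    then have "\<forall>k. 0 \<le> v i $ k \<and> v i $ k < int p" using assms by (simp add: configs_def)
    then show ?thesis by (simp add: act_def vec_eq_iff)
  next
    case False
    then have "v i = 0" using assms by (simp add: configs_def)
    then show ?thesis by (simp add: act_def vec_eq_iff)
  qed
qed

definition G :: "real \<Rightarrow> nat \<Rightarrow> real" where
  "G q m = (\<Sum>l<m. q^l * (q-1) * (q^2)^(m - Suc l))"

lemma G_closed: "q * G q m = q^(2*m) - q^m"
proof (induction m)
  case 0 then show ?case by (simp add: G_def)
next
  case (Suc m)
  have "G q (Suc m) = (\<Sum>l<m. q^l * (q-1) * (q^2)^(Suc m - Suc l)) + q^m*(q-1)"
    by (simp add: G_def)
  also have "(\<Sum>l<m. q^l * (q-1) * (q^2)^(Suc m - Suc l)) = q^2 * G q m"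
    unfolding G_def sum_distrib_left
  proof (rule sum.cong[OF refl])
    fix l assume "l \<in> {..<m}"
    then have "Suc m - Suc l = Suc (m - Suc l)" by auto
    then show "q^l * (q-1) * (q^2)^(Suc m - Suc l) = q^2 * (q^l * (q-1) * (q^2)^(m - Suc l))"
      by simp
  qed
  finally have eq: "G q (Suc m) = q^2 * G q m + q^m*(q-1)" .
  have "q * G q (Suc m) = q^2 * (q * G q m) + q^(Suc m) * (q - 1)"
    by (subst eq) (simp add: algebra_simps)
  also have "\<dots> = q^(2*Suc m) - q^Suc m" unfolding Suc
    by (simp add: algebra_simps power_mult_distrib power_add power2_eq_square power_mult)
  finally show ?case .
qed

lemma inner_reindex: "(\<Sum>k\<in>{j<..<n}. q^(k - Suc j) * (q-1) * (q^2)^(n - Suc k)) = G q (n - Suc j)"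
proof -
  have e: "{j<..<n} = (\<lambda>l. Suc j + l) ` {..<n - Suc j}"
  proof
    show "{j<..<n} \<subseteq> (\<lambda>l. Suc j + l) ` {..<n - Suc j}"
    proof
      fix k assume "k \<in> {j<..<n}"
      then show "k \<in> (\<lambda>l. Suc j + l) ` {..<n - Suc j}"
        by (intro image_eqI[of _ _ "k - Suc j"]) auto
    qed
  qed auto
  have i: "inj_on (\<lambda>l. Suc j + l) {..<n - Suc j}" by (auto simp: inj_on_def)
  show ?thesis unfolding e G_def sum.reindex[OF i]
    by (intro sum.cong refl) (auto simp: algebra_simps)
qed

definition S :: "real \<Rightarrow> nat \<Rightarrow> real" where
  "S q n = 1 + (\<Sum>j<n. q^(n - Suc j)) + (\<Sum>j<n. \<Sum>k\<in>{j<..<n}. q^(k - Suc j) * (q-1) * (q^2)^(n - Suc k))"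

lemma S_alt: "S q n = 1 + (\<Sum>m<n. q^m + G q m)"
proof -
  have "S q n = 1 + (\<Sum>j<n. q^(n - Suc j) + G q (n - Suc j))"
    unfolding S_def inner_reindex by (simp add: sum.distrib)
  also have "(\<Sum>j<n. q^(n - Suc j) + G q (n - Suc j)) = (\<Sum>m<n. q^m + G q m)"
    by (rule sum.nat_diff_reindex)
  finally show ?thesis .
qed

lemma S_closed: "q * (q^2 - 1) * S q n = q^(2*n) + q^(n+2) - q^n + q^3 - q^2 - q"
proof (induction n)
  case 0 then show ?case by (simp add: S_alt algebra_simps power2_eq_square power3_eq_cube)
next
  case (Suc n)
  have "S q (Suc n) = S q n + q^n + G q n" by (simp add: S_alt)
  then have "q * (q^2 - 1) * S q (Suc n) = q * (q^2 - 1) * S q n + (q^2-1) * (q^(Suc n) + q * G q n)"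
    by (simp add: algebra_simps)
  also have "\<dots> = q^(2*Suc n) + q^(Suc n+2) - q^Suc n + q^3 - q^2 - q"
    unfolding Suc G_closed
    by (simp add: algebra_simps power_add power2_eq_square power_mult)
  finally show ?case .
qed

lemma S_final: assumes "q > 0" "q^2 \<noteq> 1" "n \<ge> 1"
  shows "S q n = (q^(2*n-1) + q^(n+1) - q^(n-1) + q^2 - q - 1) / (q^2 - 1)"
proof -
  obtain m where n: "n = Suc m" using assms(3) by (cases n) auto
  have "q * ((q^2 - 1) * S q n) = q * (q^(2*n-1) + q^(n+1) - q^(n-1) + q^2 - q - 1)"
    using S_closed[of q n] unfolding n
    by (simp add: algebra_simps power2_eq_square power3_eq_cube)
  then have "(q^2 - 1) * S q n = q^(2*n-1) + q^(n+1) - q^(n-1) + q^2 - q - 1"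
    using assms(1) by simp
  then show ?thesis using assms(2) by (simp add: field_simps)
qed


lemma orbit_act:
  assumes "v \<in> configs p n" "A \<in> SL2Z"
  shows "orbit p (act p A v) = orbit p v"
proof
  show "orbit p (act p A v) \<subseteq> orbit p v"
    using assms by (auto simp: orbit_def act_comp intro: SL2Z_mult)
next
  obtain B where B: "B \<in> SL2Z" "B ** A = mat 1" using SL2Z_inv[OF assms(2)] by blast
  show "orbit p v \<subseteq> orbit p (act p A v)"
  proof
    fix w assume "w \<in> orbit p v"
    then obtain X where X: "X \<in> SL2Z" "w = act p X v" by (auto simp: orbit_def)
    have "w = act p X (act p (B ** A) v)" using X act_id[OF assms(1)] B by simp
    also have "\<dots> = act p (X ** B) (act p A v)" by (simp add: act_comp matrix_mul_assoc)
    finally show "w \<in> orbit p (act p A v)"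
      using X B by (auto simp: orbit_def intro: SL2Z_mult)
  qed
qed

lemma act_general: "act p A v i = v2 ((A *v v i)$1 mod int p) ((A *v v i)$2 mod int p)"
  by (simp add: act_def vec_eq_iff forall_2)

lemma act_v2: "v i = v2 x y \<Longrightarrow>
   act p (m2 a b c d) v i = v2 ((a*x+b*y) mod int p) ((c*x+d*y) mod int p)"
  by (simp add: act_general)

lemma act_zero_col: "v i = 0 \<Longrightarrow> act p A v i = 0"
  by (simp add: act_general zero_v2[symmetric])

lemma act_zero: "act p A (\<lambda>i. 0) = (\<lambda>i. 0)"
  by (rule ext) (simp add: act_zero_col)

lemma configs_col:
  assumes "v \<in> configs p n" "i < n"
  shows "v i = v2 (v i $ 1) (v i $ 2)" "0 \<le> v i $ 1" "v i $ 1 < int p" "0 \<le> v i $ 2" "v i $ 2 < int p"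
  using assms by (auto simp: configs_def intro: v2_eta)

lemma configs_high: "v \<in> configs p n \<Longrightarrow> n \<le> i \<Longrightarrow> v i = 0"
  by (simp add: configs_def)

lemma configs_nonzero_lt: "v \<in> configs p n \<Longrightarrow> v i \<noteq> 0 \<Longrightarrow> i < n"
  using configs_high not_less by blast

lemma prime_int_p: "prime p \<Longrightarrow> prime (int p)" by simp

lemma mod_inverse:
  assumes "prime p" "\<not> int p dvd a"
  shows "\<exists>a'. int p dvd (a * a' - 1)"
proof -
  have "coprime (int p) a" using assms by (intro prime_imp_coprime) simp_all
  then have g: "gcd a (int p) = 1" by (simp add: coprime_iff_gcd_eq_1 gcd.commute)
  obtain u w where "u * a + w * int p = gcd a (int p)" using bezout_int by blast
  then have "a * u - 1 = int p * (- w)" using g by (simp add: algebra_simps)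
  then show ?thesis by (intro exI[of _ u]) (metis dvd_triv_left)
qed

lemma not_dvd_range: "0 \<le> a \<Longrightarrow> a < int p \<Longrightarrow> a \<noteq> 0 \<Longrightarrow> \<not> int p dvd a"
  using zdvd_imp_le by fastforce

lemma dvd_mod_eq: "int p dvd (x - y) \<Longrightarrow> x mod int p = y mod int p"
  by (metis mod_eq_dvd_iff)

lemma to_e1_a:
  assumes "prime p" "\<not> int p dvd a"
  shows "\<exists>A\<in>SL2Z. (A *v v2 a b) $ 1 mod int p = 1 \<and> (A *v v2 a b) $ 2 mod int p = 0"
proof -
  have p2: "int p \<ge> 2" using assms(1) prime_ge_2_nat by fastforce
  obtain a' where t: "int p dvd (a * a' - 1)" using mod_inverse[OF assms] by blast
  define t where "t = a * a' - 1"
  define s where "s = - b * a'"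
  define u where "u = a'"
  define A where "A = m2 (u*(2-u*a) + (u*a-1) * s) (u*a-1) ((1-u*a) + a * s) a"
  have det: "det A = 1" unfolding A_def by (simp add: algebra_simps)
  have c1: "(A *v v2 a b) $ 1 = 1 + t * (- t + s*a + b)"
    unfolding A_def t_def u_def by (simp add: algebra_simps)
  have c2: "(A *v v2 a b) $ 2 = t * (- (a + a*b))"
    unfolding A_def t_def u_def s_def by (simp add: algebra_simps)
  have "int p dvd t" using t by (simp add: t_def)
  then have "(A *v v2 a b) $ 1 mod int p = 1 mod int p" "(A *v v2 a b) $ 2 mod int p = 0"
    unfolding c1 c2 by (auto intro!: dvd_mod_eq)
  moreover have "1 mod int p = 1" using p2 by simp
  ultimately show ?thesis using det by (auto simp: SL2Z_def)
qed

lemma to_e1: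
  assumes "prime p" "\<not> (int p dvd a \<and> int p dvd b)"
  shows "\<exists>A\<in>SL2Z. (A *v v2 a b) $ 1 mod int p = 1 \<and> (A *v v2 a b) $ 2 mod int p = 0"
proof (cases "int p dvd a")
  case False then show ?thesis by (rule to_e1_a[OF assms(1)])
next
  case True
  then have nb: "\<not> int p dvd b" using assms(2) by simp
  obtain A where A: "A \<in> SL2Z" "(A *v v2 b (-a)) $ 1 mod int p = 1 \<and> (A *v v2 b (-a)) $ 2 mod int p = 0"
    using to_e1_a[OF assms(1) nb, of "-a"] by (elim bexE conjE) (intro that conjI)
  have S: "m2 0 1 (-1) 0 \<in> SL2Z" by (simp add: SL2Z_def)
  have "m2 0 1 (-1) 0 *v v2 a b = v2 b (-a)" by simp
  then have e: "(A ** m2 0 1 (-1) 0) *v v2 a b = A *v v2 b (-a)"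
    by (metis matrix_vector_mul_assoc)
  have "A ** m2 0 1 (-1) 0 \<in> SL2Z" using A(1) S by (rule SL2Z_mult)
  moreover have "((A ** m2 0 1 (-1) 0) *v v2 a b) $ 1 mod int p = 1 \<and> ((A ** m2 0 1 (-1) 0) *v v2 a b) $ 2 mod int p = 0"
    unfolding e using A(2) .
  ultimately show ?thesis by (rule bexI[rotated])
qed

definition colH :: "nat \<Rightarrow> (int^2) set" where "colH p = (\<lambda>x. v2 x 0) ` {0..<int p}"
definition colK :: "nat \<Rightarrow> (int^2) set" where "colK p = (\<lambda>x. v2 0 x) ` {1..<int p}"
definition colF :: "nat \<Rightarrow> (int^2) set" where
  "colF p = (\<lambda>(x,y). v2 x y) ` ({0..<int p} \<times> {0..<int p})"

definition B1 :: "nat \<Rightarrow> nat \<Rightarrow> nat \<Rightarrow> nat \<Rightarrow> (int^2) set" where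
  "B1 p n j i = (if i < j then {0} else if i = j then {v2 1 0} else if i < n then colH p else {0})"
definition B2 :: "nat \<Rightarrow> nat \<Rightarrow> nat \<Rightarrow> nat \<Rightarrow> nat \<Rightarrow> (int^2) set" where
  "B2 p n j k i = (if i < j then {0} else if i = j then {v2 1 0} else if i < k then colH p
      else if i = k then colK p else if i < n then colF p else {0})"
definition PiS :: "(nat \<Rightarrow> (int^2) set) \<Rightarrow> (nat \<Rightarrow> int^2) set" where
  "PiS B = {v. \<forall>i. v i \<in> B i}"

definition Canon :: "nat \<Rightarrow> nat \<Rightarrow> (nat \<Rightarrow> int^2) set" where
  "Canon p n = {\<lambda>i. 0} \<union> (\<Union>j<n. PiS (B1 p n j)) \<union> (\<Union>j<n. \<Union>k\<in>{j<..<n}. PiS (B2 p n j k))"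

lemma e1_ne0[simp]: "v2 1 0 \<noteq> 0" by (simp add: zero_v2 v2_eq_iff)

lemma colF_iff: "x \<in> colF p \<longleftrightarrow> (0 \<le> x$1 \<and> x$1 < int p \<and> 0 \<le> x$2 \<and> x$2 < int p)"
proof
  assume "0 \<le> x$1 \<and> x$1 < int p \<and> 0 \<le> x$2 \<and> x$2 < int p"
  then show "x \<in> colF p" unfolding colF_def
    by (intro image_eqI[of _ _ "(x$1, x$2)"]) (auto simp: v2_eta[symmetric])
qed (auto simp: colF_def)

lemma colH_iff: "x \<in> colH p \<longleftrightarrow> (0 \<le> x$1 \<and> x$1 < int p \<and> x$2 = 0)"
proof
  assume a: "0 \<le> x$1 \<and> x$1 < int p \<and> x$2 = 0"
  then have "x = v2 (x$1) 0" by (metis v2_eta)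
  then show "x \<in> colH p" unfolding colH_def using a by auto
qed (auto simp: colH_def)

lemma colK_iff: "x \<in> colK p \<longleftrightarrow> (x$1 = 0 \<and> 0 < x$2 \<and> x$2 < int p)"
proof
  assume a: "x$1 = 0 \<and> 0 < x$2 \<and> x$2 < int p"
  then have "x = v2 0 (x$2)" by (metis v2_eta)
  then show "x \<in> colK p" unfolding colK_def using a by auto
qed (auto simp: colK_def)


lemma configs_range_all:
  assumes "v \<in> configs p n" "p > 0"
  shows "0 \<le> v i $ 1 \<and> v i $ 1 < int p \<and> 0 \<le> v i $ 2 \<and> v i $ 2 < int p"
proof (cases "i < n")
  case True then show ?thesis using configs_col[OF assms(1)] by auto
next
  case False then show ?thesis using configs_high[OF assms(1)] assms(2) by simp
qed

lemma PiS_B1_mem: assumes "\<forall>i<j. w i = 0" "w j = v2 1 0"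
   "\<forall>i. j < i \<and> i < n \<longrightarrow> w i \<in> colH p" "\<forall>i\<ge>n. w i = 0"
 shows "w \<in> PiS (B1 p n j)"
  using assms unfolding PiS_def B1_def by (auto simp: not_less)

lemma PiS_B2_mem: assumes "\<forall>i<j. w i = 0" "w j = v2 1 0"
   "\<forall>i. j < i \<and> i < k \<longrightarrow> w i \<in> colH p" "w k \<in> colK p"
   "\<forall>i. k < i \<and> i < n \<longrightarrow> w i \<in> colF p" "\<forall>i\<ge>n. w i = 0" "j < k"
 shows "w \<in> PiS (B2 p n j k)"
  using assms unfolding PiS_def B2_def by (auto simp: not_less)

lemma exists_canon:
  assumes "prime p" "v \<in> configs p n"
  shows "\<exists>A\<in>SL2Z. act p A v \<in> Canon p n"
proof (cases "v = (\<lambda>i. 0)")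
  case True
  then show ?thesis using SL2Z_one act_id[OF assms(2)] by (auto simp: Canon_def)
next
  case False
  have p2: "int p \<ge> 2" using assms(1) prime_ge_2_nat by fastforce
  have p0: "p > 0" using p2 by simp
  from False obtain i0 where i0: "v i0 \<noteq> 0" by auto
  define j where "j = (LEAST i. v i \<noteq> 0)"
  have vj: "v j \<noteq> 0" unfolding j_def by (rule LeastI) (rule i0)
  have below: "\<forall>i<j. v i = 0" unfolding j_def using not_less_Least by blast
  have jn: "j < n" using configs_nonzero_lt[OF assms(2) vj] .
  note vjc = configs_col[OF assms(2) jn]
  have nd: "\<not> (int p dvd v j$1 \<and> int p dvd v j$2)"
  proof
    assume "int p dvd v j$1 \<and> int p dvd v j$2"
    then have "v j$1 = 0" "v j$2 = 0"
      using not_dvd_range[of "v j$1" p] not_dvd_range[of "v j$2" p] vjc by auto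
    then show False using vj vjc(1) by (simp add: zero_v2)
  qed
  obtain A1 where A1: "A1 \<in> SL2Z" "(A1 *v v j) $ 1 mod int p = 1" "(A1 *v v j) $ 2 mod int p = 0"
  proof -
    have "\<exists>A\<in>SL2Z. (A *v v j)$1 mod int p = 1 \<and> (A *v v j)$2 mod int p = 0"
      using to_e1[OF assms(1) nd] by (simp only: vjc(1)[symmetric])
    then show ?thesis by (elim bexE conjE) (rule that)
  qed
  define w where "w = act p A1 v"
  have wc: "w \<in> configs p n" unfolding w_def by (rule act_configs[OF p0 assms(2)])
  have wbelow: "\<forall>i<j. w i = 0" unfolding w_def using below act_zero_col by blast
  have wj: "w j = v2 1 0" unfolding w_def act_general using A1 by simp
  show ?thesis
  proof (cases "\<forall>i. j < i \<and> i < n \<longrightarrow> w i $ 2 = 0")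
    case True
    have "w \<in> PiS (B1 p n j)"
    proof (rule PiS_B1_mem[OF wbelow wj])
      show "\<forall>i. j < i \<and> i < n \<longrightarrow> w i \<in> colH p"
        using True configs_col[OF wc] by (auto simp: colH_iff)
      show "\<forall>i\<ge>n. w i = 0" using configs_high[OF wc] by blast
    qed
    then show ?thesis using A1(1) jn unfolding w_def Canon_def by blast
  next
    case False
    then obtain i1 where i1: "j < i1 \<and> i1 < n \<and> w i1 $ 2 \<noteq> 0" by blast
    define k where "k = (LEAST i. j < i \<and> i < n \<and> w i $ 2 \<noteq> 0)"
    have kp: "j < k \<and> k < n \<and> w k $ 2 \<noteq> 0" unfolding k_def by (rule LeastI) (rule i1)
    have kbelow: "\<forall>i. j < i \<and> i < k \<longrightarrow> w i $ 2 = 0"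
    proof (intro allI impI)
      fix i assume i: "j < i \<and> i < k"
      then have "\<not> (j < i \<and> i < n \<and> w i $ 2 \<noteq> 0)"
        unfolding k_def by (rule conjunct2[THEN not_less_Least])
      then show "w i $ 2 = 0" using i kp by auto
    qed
    define a where "a = w k $ 1"
    define b where "b = w k $ 2"
    have ab: "0 \<le> a" "a < int p" "0 \<le> b" "b < int p" "b \<noteq> 0" "w k = v2 a b"
      using configs_col[OF wc, of k] kp unfolding a_def b_def by auto
    obtain b' where b': "int p dvd (b * b' - 1)"
      using mod_inverse[OF assms(1) not_dvd_range[OF ab(3,4,5)]] by blast
    define T where "T = m2 1 (-a*b') 0 1"
    have T: "T \<in> SL2Z" unfolding T_def SL2Z_def by simp
    define u where "u = act p T w"
    have uc: "u \<in> configs p n" unfolding u_def by (rule act_configs[OF p0 wc])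
    have "u \<in> PiS (B2 p n j k)"
    proof (rule PiS_B2_mem)
      show "\<forall>i<j. u i = 0" unfolding u_def using wbelow act_zero_col by blast
      show "u j = v2 1 0" unfolding u_def T_def using act_v2[of w j 1 0, OF wj] p2 by simp
      show "\<forall>i. j < i \<and> i < k \<longrightarrow> u i \<in> colH p"
      proof (intro allI impI)
        fix i assume i: "j < i \<and> i < k"
        then have w2: "w i $ 2 = 0" using kbelow by blast
        have ic: "w i = v2 (w i $ 1) 0" "0 \<le> w i $ 1" "w i $ 1 < int p"
          using configs_col[OF wc, of i] i kp w2 by auto
        have "u i = v2 (w i $ 1) 0" unfolding u_def T_def using act_v2[of w i "w i $ 1" 0, OF ic(1)] ic by simp
        then show "u i \<in> colH p" using ic w2 by (simp add: colH_iff)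
      qed
      have "(a + (-a*b')*b) mod int p = 0 mod int p"
      proof (rule dvd_mod_eq)
        have "a + (-a*b')*b - 0 = (-a) * (b * b' - 1)" by (simp add: algebra_simps)
        then show "int p dvd (a + (-a*b')*b - 0)" using b' by simp
      qed
      then have "u k = v2 0 b" unfolding u_def T_def using act_v2[of w k a b, OF ab(6)] ab by simp
      then show "u k \<in> colK p" using ab by (simp add: colK_iff)
      show "\<forall>i. k < i \<and> i < n \<longrightarrow> u i \<in> colF p"
        using configs_col[OF uc] by (auto simp: colF_iff)
      show "\<forall>i\<ge>n. u i = 0" using configs_high[OF uc] by blast
      show "j < k" using kp by simp
    qed
    moreover have "u = act p (T ** A1) v" unfolding u_def w_def by (simp add: act_comp)
    ultimately show ?thesis using T A1(1) kp unfolding Canon_def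
      by (intro bexI[of _ "T ** A1"]) (auto intro: SL2Z_mult)
  qed
qed


lemma PiS_configs:
  assumes "\<forall>i<n. B i \<subseteq> colF p" "\<forall>i\<ge>n. B i = {0}"
  shows "PiS B \<subseteq> configs p n"
proof
  fix v assume v: "v \<in> PiS B"
  have "\<forall>i<n. \<forall>k. 0 \<le> v i $ k \<and> v i $ k < int p"
  proof (intro allI impI)
    fix i k assume "i < n"
    then have "v i \<in> colF p" using v assms(1) unfolding PiS_def by blast
    then show "0 \<le> v i $ k \<and> v i $ k < int p" using exhaust_2[of k] by (auto simp: colF_iff)
  qed
  moreover have "\<forall>i\<ge>n. v i = 0" using v assms(2) unfolding PiS_def by blast
  ultimately show "v \<in> configs p n" by (simp add: configs_def)
qed

lemma Canon_configs:
  assumes "prime p"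
  shows "Canon p n \<subseteq> configs p n"
proof -
  have p2: "int p \<ge> 2" using assms(1) prime_ge_2_nat by fastforce
  have sub: "{0} \<subseteq> colF p" "{v2 1 0} \<subseteq> colF p" "colH p \<subseteq> colF p" "colK p \<subseteq> colF p"
    using p2 by (auto simp: colF_iff colH_iff colK_iff)
  have z: "(\<lambda>i. 0) \<in> configs p n" using p2 by (simp add: configs_def)
  have A1: "PiS (B1 p n j) \<subseteq> configs p n" if "j \<in> {..<n}" for j
    by (rule PiS_configs) (use sub that in \<open>auto simp: B1_def\<close>)
  have A2: "PiS (B2 p n j k) \<subseteq> configs p n" if "j \<in> {..<n}" "k \<in> {j<..<n}" for j k
    by (rule PiS_configs) (use sub that in \<open>auto simp: B2_def\<close>)
  show ?thesis unfolding Canon_def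
    by (intro Un_least UN_least) (simp_all add: z A1 A2)
qed

lemma Canon_sig:
  assumes "c \<in> Canon p n" "c \<noteq> (\<lambda>i. 0)"
  shows "\<exists>j<n. (\<forall>i<j. c i = 0) \<and> c j = v2 1 0 \<and>
     ((\<forall>i. j<i \<and> i<n \<longrightarrow> c i$2 = 0) \<or>
      (\<exists>k. j<k \<and> k<n \<and> (\<forall>i. j<i \<and> i<k \<longrightarrow> c i$2 = 0) \<and> c k$1 = 0 \<and> c k$2 \<noteq> 0))"
proof -
  consider (one) j where "j < n" "c \<in> PiS (B1 p n j)"
    | (two) j k where "j < n" "j < k" "k < n" "c \<in> PiS (B2 p n j k)"
    using assms unfolding Canon_def by auto
  then show ?thesis
  proof cases
    case one
    have m: "c i \<in> B1 p n j i" for i using one(2) unfolding PiS_def by blast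
    have "\<forall>i<j. c i = 0"
    proof (intro allI impI)
      fix i assume "i < j" then show "c i = 0" using m[of i] by (simp add: B1_def)
    qed
    moreover have "c j = v2 1 0" using m[of j] by (simp add: B1_def)
    moreover have "\<forall>i. j<i \<and> i<n \<longrightarrow> c i$2 = 0"
    proof (intro allI impI)
      fix i assume "j<i \<and> i<n" then show "c i$2 = 0" using m[of i] by (simp add: B1_def colH_iff)
    qed
    ultimately show ?thesis using one(1) by (intro exI[of _ j]) auto
  next
    case two
    have m: "c i \<in> B2 p n j k i" for i using two(4) unfolding PiS_def by blast
    have "\<forall>i<j. c i = 0"
    proof (intro allI impI)
      fix i assume "i < j" then show "c i = 0" using m[of i] by (simp add: B2_def)
    qed
    moreover have "c j = v2 1 0" using m[of j] by (simp add: B2_def)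
    moreover have "\<forall>i. j<i \<and> i<k \<longrightarrow> c i$2 = 0"
    proof (intro allI impI)
      fix i assume "j<i \<and> i<k" then show "c i$2 = 0" using m[of i] by (simp add: B2_def colH_iff)
    qed
    moreover have "c k$1 = 0 \<and> c k$2 \<noteq> 0" using m[of k] two by (auto simp: B2_def colK_iff)
    ultimately show ?thesis using two by (intro exI[of _ j] conjI disjI2 exI[of _ k]) auto
  qed
qed

lemma canon_unique:
  assumes "prime p" "c \<in> Canon p n" "c' \<in> Canon p n" "A \<in> SL2Z" "c' = act p A c"
  shows "c' = c"
proof -
  have p2: "int p \<ge> 2" using assms(1) prime_ge_2_nat by fastforce
  have p0: "p > 0" using p2 by simp
  have cc: "c \<in> configs p n" and cc': "c' \<in> configs p n"
    using Canon_configs[OF assms(1)] assms(2,3) by blast+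
  obtain B where B: "B \<in> SL2Z" "B ** A = mat 1" using SL2Z_inv[OF assms(4)] by blast
  have cB: "c = act p B c'"
  proof -
    have "act p B c' = act p (B ** A) c" unfolding assms(5) by (rule act_comp)
    then show ?thesis using B(2) act_id[OF cc] by simp
  qed
  have zeq: "c i = 0 \<longleftrightarrow> c' i = 0" for i
  proof
    assume "c i = 0" then show "c' i = 0" using act_zero_col[of c i p A] assms(5) by simp
  next
    assume "c' i = 0" then have "act p B c' i = 0" by (rule act_zero_col)
    then show "c i = 0" using cB by simp
  qed
  show ?thesis
  proof (cases "c = (\<lambda>i. 0)")
    case True
    then show ?thesis using assms(5) act_zero by simp
  next
    case False
    have False': "c' \<noteq> (\<lambda>i. 0)"
      using False zeq by auto
    obtain j where j: "j < n" "\<forall>i<j. c i = 0" "c j = v2 1 0"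
      "(\<forall>i. j<i \<and> i<n \<longrightarrow> c i$2 = 0) \<or>
       (\<exists>k. j<k \<and> k<n \<and> (\<forall>i. j<i \<and> i<k \<longrightarrow> c i$2 = 0) \<and> c k$1 = 0 \<and> c k$2 \<noteq> 0)"
      using Canon_sig[OF assms(2) False] by blast
    obtain j' where j': "j' < n" "\<forall>i<j'. c' i = 0" "c' j' = v2 1 0"
      "(\<forall>i. j'<i \<and> i<n \<longrightarrow> c' i$2 = 0) \<or>
       (\<exists>k. j'<k \<and> k<n \<and> (\<forall>i. j'<i \<and> i<k \<longrightarrow> c' i$2 = 0) \<and> c' k$1 = 0 \<and> c' k$2 \<noteq> 0)"
      using Canon_sig[OF assms(3) False'] by blast
    have jj: "j' = j"
    proof (rule ccontr)
      assume "j' \<noteq> j"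
      then consider "j' < j" | "j < j'" by linarith
      then show False
      proof cases
        case 1 then show False using j(2) j'(3) zeq[of j'] by auto
      next
        case 2 then show False using j(3) j'(2) zeq[of j] by auto
      qed
    qed
    obtain al be ga de where A: "A = m2 al be ga de" using m2_eta by blast
    have det: "al * de - be * ga = 1" using assms(4) A by (simp add: SL2Z_def)
    have "c' j = v2 (al mod int p) (ga mod int p)"
      using assms(5) act_v2[of c j 1 0 p al be ga de, OF j(3)] A by simp
    then have alga: "al mod int p = 1" "ga mod int p = 0" using j'(3) jj by (auto simp: v2_eq_iff)
    have "al mod int p = 1 mod int p" using alga(1) p2 by simp
    then have d1: "int p dvd (al - 1)" by (simp add: mod_eq_dvd_iff)
    have d2: "int p dvd ga" using alga(2) by (simp add: mod_eq_0_iff_dvd)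
    have d3: "int p dvd (de - 1)"
    proof -
      have "de - 1 = (1 - al) * de + be * ga" using det by (simp add: algebra_simps)
      also have "int p dvd \<dots>"
      proof (rule dvd_add)
        have "int p dvd (1 - al)" using d1 by (metis dvd_minus_iff minus_diff_eq)
        then show "int p dvd (1 - al) * de" by (rule dvd_mult2)
        show "int p dvd be * ga" using d2 by (rule dvd_mult)
      qed
      finally show ?thesis .
    qed
    have rng: "0 \<le> c i $ 1 \<and> c i $ 1 < int p \<and> 0 \<le> c i $ 2 \<and> c i $ 2 < int p" for i
      using configs_range_all[OF cc p0] .
    have col: "c' i = v2 ((c i$1 + be * c i$2) mod int p) (c i$2)" for i
    proof -
      have e: "c i = v2 (c i$1) (c i$2)" by (rule v2_eta)
      have "c' i = v2 ((al * c i$1 + be * c i$2) mod int p) ((ga * c i$1 + de * c i$2) mod int p)"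
        using assms(5) act_v2[of c i "c i$1" "c i$2" p al be ga de, OF e] A by simp
      moreover have "(al * c i$1 + be * c i$2) mod int p = (c i$1 + be * c i$2) mod int p"
      proof (rule dvd_mod_eq)
        have "al * c i$1 + be * c i$2 - (c i$1 + be * c i$2) = (al - 1) * c i$1"
          by (simp add: algebra_simps)
        then show "int p dvd (al * c i$1 + be * c i$2 - (c i$1 + be * c i$2))" using d1 by simp
      qed
      moreover have "(ga * c i$1 + de * c i$2) mod int p = c i$2 mod int p"
      proof (rule dvd_mod_eq)
        have e2: "ga * c i$1 + de * c i$2 - c i$2 = ga * c i$1 + (de - 1) * c i$2"
          by (simp add: algebra_simps)
        have "int p dvd ga * c i$1 + (de - 1) * c i$2" by (intro dvd_add dvd_mult2 d2 d3)
        then show "int p dvd (ga * c i$1 + de * c i$2 - c i$2)" by (simp only: e2)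
      qed
      moreover have "c i$2 mod int p = c i$2" using rng[of i] by simp
      ultimately show ?thesis by simp
    qed
    have sec: "c' i $ 2 = c i $ 2" for i using col[of i] by simp
    have flat: "c' i = c i" if "c i $ 2 = 0" for i
    proof -
      have "c' i = v2 (c i$1 mod int p) 0" using col[of i] that by simp
      also have "\<dots> = v2 (c i $ 1) (c i $ 2)" using rng[of i] that by simp
      also have "\<dots> = c i" by (rule v2_eta[symmetric])
      finally show ?thesis .
    qed
    show ?thesis
    proof (cases "\<forall>i. j<i \<and> i<n \<longrightarrow> c i$2 = 0")
      case True
      have "c' i = c i" for i
      proof -
        consider "i < j" | "i = j" | "j < i \<and> i < n" | "n \<le> i" by linarith
        then show ?thesis
        proof cases
          case 1 then show ?thesis using j(2) zeq by auto
        next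
          case 2 then show ?thesis using j(3) j'(3) jj by simp
        next
          case 3 then show ?thesis using True flat by blast
        next
          case 4 then show ?thesis using configs_high[OF cc] configs_high[OF cc'] by simp
        qed
      qed
      then show ?thesis by (rule ext)
    next
      case False
      then obtain k where k: "j<k" "k<n" "\<forall>i. j<i \<and> i<k \<longrightarrow> c i$2 = 0" "c k$1 = 0" "c k$2 \<noteq> 0"
        using j(4) by blast
      obtain k' where k': "j<k'" "k'<n" "\<forall>i. j<i \<and> i<k' \<longrightarrow> c' i$2 = 0" "c' k'$1 = 0" "c' k'$2 \<noteq> 0"
      proof -
        have "\<not> (\<forall>i. j<i \<and> i<n \<longrightarrow> c' i$2 = 0)" using k(1,2,5) sec by auto
        then show ?thesis using j'(4) jj that by blast
      qed
      have kk: "k' = k"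
      proof (rule ccontr)
        assume "k' \<noteq> k"
        then consider "k' < k" | "k < k'" by linarith
        then show False
        proof cases
          case 1 then show False using k(3) k'(1,5) sec by auto
        next
          case 2 then show False using k(1,5) k'(3) sec by auto
        qed
      qed
      have "(be * c k$2) mod int p = 0" using col[of k] k'(4) kk k(4) by simp
      then have "int p dvd be * c k$2" by (simp add: mod_eq_0_iff_dvd)
      moreover have "\<not> int p dvd c k$2" using not_dvd_range rng[of k] k(5) by blast
      ultimately have dbe: "int p dvd be"
        using prime_dvd_mult_iff[OF prime_int_p[OF assms(1)]] by blast
      have "c' i = c i" for i
      proof -
        have "(c i$1 + be * c i$2) mod int p = c i$1 mod int p"
          by (rule dvd_mod_eq) (use dbe in simp)
        then have "c' i = v2 (c i$1) (c i$2)" using col[of i] rng[of i] by simp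
        then show ?thesis by (simp add: v2_eta[symmetric])
      qed
      then show ?thesis by (rule ext)
    qed
  qed
qed


lemma PiS_image:
  assumes "\<forall>i\<ge>n. B i = {0}"
  shows "PiS B = (\<lambda>f i. if i < n then f i else 0) ` PiE {..<n} B"
proof
  show "PiS B \<subseteq> (\<lambda>f i. if i < n then f i else 0) ` PiE {..<n} B"
  proof
    fix v assume v: "v \<in> PiS B"
    have "v = (\<lambda>i. if i < n then restrict v {..<n} i else 0)"
    proof (rule ext)
      fix i show "v i = (if i < n then restrict v {..<n} i else 0)"
      proof (cases "i < n")
        case False
        then have "B i = {0}" using assms by simp
        moreover have "v i \<in> B i" using v unfolding PiS_def by blast
        ultimately show ?thesis using False by simp
      qed simp
    qed
    moreover have "restrict v {..<n} \<in> PiE {..<n} B" using v unfolding PiS_def by auto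
    ultimately show "v \<in> (\<lambda>f i. if i < n then f i else 0) ` PiE {..<n} B"
      by (rule image_eqI)
  qed
  show "(\<lambda>f i. if i < n then f i else 0) ` PiE {..<n} B \<subseteq> PiS B"
    using assms unfolding PiS_def by (auto simp: PiE_iff)
qed

lemma PiS_inj: "inj_on (\<lambda>f i. if i < n then f i else (0::int^2)) (PiE {..<n} B)"
proof (rule inj_onI)
  fix f g assume f: "f \<in> PiE {..<n} B" and g: "g \<in> PiE {..<n} B"
    and e: "(\<lambda>i. if i < n then f i else 0) = (\<lambda>i. if i < n then g i else 0)"
  show "f = g"
  proof (rule PiE_ext[OF f g])
    fix i assume "i \<in> {..<n}"
    then show "f i = g i" using fun_cong[OF e, of i] by simp
  qed
qed

lemma card_PiS:
  assumes "\<forall>i\<ge>n. B i = {0}" "\<forall>i<n. finite (B i)"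
  shows "card (PiS B) = (\<Prod>i<n. card (B i))" "finite (PiS B)"
proof -
  have "card (PiS B) = card (PiE {..<n} B)"
    unfolding PiS_image[OF assms(1)] by (rule card_image[OF PiS_inj])
  also have "\<dots> = (\<Prod>i<n. card (B i))" by (simp add: card_PiE)
  finally show "card (PiS B) = (\<Prod>i<n. card (B i))" .
  show "finite (PiS B)" unfolding PiS_image[OF assms(1)]
    using assms(2) by (intro finite_imageI finite_PiE) auto
qed

lemma card_colH: "card (colH p) = p"
proof -
  have "inj_on (\<lambda>x. v2 x 0) {0..<int p}" by (auto simp: inj_on_def v2_eq_iff)
  then show ?thesis unfolding colH_def by (simp add: card_image)
qed

lemma card_colK: "card (colK p) = p - 1"
proof -
  have "inj_on (\<lambda>x. v2 0 x) {1..<int p}" by (auto simp: inj_on_def v2_eq_iff)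
  then show ?thesis unfolding colK_def by (simp add: card_image nat_diff_distrib)
qed

lemma card_colF: "card (colF p) = p^2"
proof -
  have "inj_on (\<lambda>(x,y). v2 x y) ({0..<int p} \<times> {0..<int p})" by (auto simp: inj_on_def v2_eq_iff)
  then show ?thesis unfolding colF_def by (simp add: card_image card_cartesian_product power2_eq_square)
qed

lemma fin_cols: "finite (colH p)" "finite (colK p)" "finite (colF p)"
  by (simp_all add: colH_def colK_def colF_def)

lemma card_B1:
  assumes "j < n"
  shows "card (PiS (B1 p n j)) = p^(n - Suc j)" "finite (PiS (B1 p n j))"
proof -
  have h: "\<forall>i\<ge>n. B1 p n j i = {0}" "\<forall>i<n. finite (B1 p n j i)"
    using assms by (auto simp: B1_def fin_cols)
  have sp: "{..<n} = {..j} \<union> {j<..<n}" using assms by auto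
  have "(\<Prod>i<n. card (B1 p n j i)) = (\<Prod>i\<in>{..j}. card (B1 p n j i)) * (\<Prod>i\<in>{j<..<n}. card (B1 p n j i))"
    unfolding sp by (rule prod.union_disjoint) auto
  also have "(\<Prod>i\<in>{..j}. card (B1 p n j i)) = 1"
    by (rule prod.neutral) (auto simp: B1_def)
  also have "(\<Prod>i\<in>{j<..<n}. card (B1 p n j i)) = (\<Prod>i\<in>{j<..<n}. p)"
    by (rule prod.cong) (auto simp: B1_def card_colH)
  also have "\<dots> = p^(n - Suc j)" by simp
  finally show "card (PiS (B1 p n j)) = p^(n - Suc j)" using card_PiS(1)[OF h] by simp
  show "finite (PiS (B1 p n j))" using card_PiS(2)[OF h] .
qed

lemma card_B2:
  assumes "j < k" "k < n"
  shows "card (PiS (B2 p n j k)) = p^(k - Suc j) * (p - 1) * (p^2)^(n - Suc k)" "finite (PiS (B2 p n j k))"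
proof -
  have h: "\<forall>i\<ge>n. B2 p n j k i = {0}" "\<forall>i<n. finite (B2 p n j k i)"
    using assms by (auto simp: B2_def fin_cols)
  let ?f = "\<lambda>i. card (B2 p n j k i)"
  have sp: "{..<n} = {..j} \<union> ({j<..<k} \<union> ({k} \<union> {k<..<n}))" using assms by auto
  have "(\<Prod>i<n. ?f i) = prod ?f {..j} * (prod ?f {j<..<k} * (prod ?f {k} * prod ?f {k<..<n}))"
    unfolding sp using assms by (subst prod.union_disjoint, auto)+
  also have "prod ?f {..j} = 1"
    by (rule prod.neutral) (auto simp: B2_def)
  also have "prod ?f {j<..<k} = (\<Prod>i\<in>{j<..<k}. p)"
    using assms by (intro prod.cong) (auto simp: B2_def card_colH)
  also have "prod ?f {k} = p - 1" using assms by (simp add: B2_def card_colK)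
  also have "prod ?f {k<..<n} = (\<Prod>i\<in>{k<..<n}. p^2)"
    using assms by (intro prod.cong) (auto simp: B2_def card_colF)
  finally have "(\<Prod>i<n. ?f i) = p^(k - Suc j) * (p - 1) * (p^2)^(n - Suc k)" by simp
  then show "card (PiS (B2 p n j k)) = p^(k - Suc j) * (p - 1) * (p^2)^(n - Suc k)"
    using card_PiS(1)[OF h] by simp
  show "finite (PiS (B2 p n j k))" using card_PiS(2)[OF h] .
qed

lemma sig_B1:
  assumes "v \<in> PiS (B1 p n j)"
  shows "\<forall>i<j. v i = 0" "v j = v2 1 0" "\<forall>i. j<i \<and> i<n \<longrightarrow> v i$2 = 0"
proof -
  have m: "v i \<in> B1 p n j i" for i using assms unfolding PiS_def by blast
  show "\<forall>i<j. v i = 0"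
  proof (intro allI impI)
    fix i assume "i < j" then show "v i = 0" using m[of i] by (simp add: B1_def)
  qed
  show "v j = v2 1 0" using m[of j] by (simp add: B1_def)
  show "\<forall>i. j<i \<and> i<n \<longrightarrow> v i$2 = 0"
  proof (intro allI impI)
    fix i assume "j<i \<and> i<n" then show "v i$2 = 0" using m[of i] by (simp add: B1_def colH_iff)
  qed
qed

lemma sig_B2:
  assumes "v \<in> PiS (B2 p n j k)" "j < k"
  shows "\<forall>i<j. v i = 0" "v j = v2 1 0" "\<forall>i. j<i \<and> i<k \<longrightarrow> v i$2 = 0" "v k$2 \<noteq> 0"
proof -
  have m: "v i \<in> B2 p n j k i" for i using assms unfolding PiS_def by blast
  show "\<forall>i<j. v i = 0"
  proof (intro allI impI)
    fix i assume "i < j" then show "v i = 0" using m[of i] by (simp add: B2_def)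
  qed
  show "v j = v2 1 0" using m[of j] by (simp add: B2_def)
  show "\<forall>i. j<i \<and> i<k \<longrightarrow> v i$2 = 0"
  proof (intro allI impI)
    fix i assume "j<i \<and> i<k" then show "v i$2 = 0" using m[of i] by (simp add: B2_def colH_iff)
  qed
  show "v k$2 \<noteq> 0" using m[of k] assms(2) by (auto simp: B2_def colK_iff)
qed

lemma first_eq:
  fixes j j' :: nat
  assumes "\<forall>i<j. v i = 0" "v j = v2 1 0" "\<forall>i<j'. v i = 0" "v j' = v2 1 0"
  shows "j = j'"
proof (rule ccontr)
  assume "j \<noteq> j'"
  then consider "j < j'" | "j' < j" by linarith
  then show False
  proof cases
    case 1 then show False using assms(2,3) by auto
  next
    case 2 then show False using assms(1,4) by auto
  qed
qed

lemma card_Canon: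
  shows "card (Canon p n) = 1 + (\<Sum>j<n. p^(n - Suc j)) +
     (\<Sum>j<n. \<Sum>k\<in>{j<..<n}. p^(k - Suc j) * (p - 1) * (p^2)^(n - Suc k))"
proof -
  define U1 where "U1 = (\<Union>j<n. PiS (B1 p n j))"
  define U2j where "U2j j = (\<Union>k\<in>{j<..<n}. PiS (B2 p n j k))" for j
  define U2 where "U2 = (\<Union>j<n. U2j j)"
  have C: "Canon p n = {\<lambda>i. 0} \<union> (U1 \<union> U2)"
    unfolding Canon_def U1_def U2_def U2j_def by auto
  have cU1: "card U1 = (\<Sum>j<n. p^(n - Suc j))" "finite U1"
  proof -
    have "card U1 = (\<Sum>j<n. card (PiS (B1 p n j)))" unfolding U1_def
    proof (rule card_UN_disjoint)
      show "\<forall>j\<in>{..<n}. finite (PiS (B1 p n j))" using card_B1(2) by auto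
      show "\<forall>j\<in>{..<n}. \<forall>j'\<in>{..<n}. j \<noteq> j' \<longrightarrow> PiS (B1 p n j) \<inter> PiS (B1 p n j') = {}"
      proof (intro ballI impI)
        fix j j' :: nat assume "j \<noteq> j'"
        show "PiS (B1 p n j) \<inter> PiS (B1 p n j') = {}"
        proof (rule ccontr)
          assume "PiS (B1 p n j) \<inter> PiS (B1 p n j') \<noteq> {}"
          then obtain v where v: "v \<in> PiS (B1 p n j)" "v \<in> PiS (B1 p n j')" by blast
          show False using first_eq[OF sig_B1(1,2)[OF v(1)] sig_B1(1,2)[OF v(2)]] \<open>j \<noteq> j'\<close> by simp
        qed
      qed
    qed simp
    also have "\<dots> = (\<Sum>j<n. p^(n - Suc j))" by (rule sum.cong) (auto simp: card_B1(1))
    finally show "card U1 = (\<Sum>j<n. p^(n - Suc j))" .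
    show "finite U1" unfolding U1_def using card_B1(2) by auto
  qed
  have cU2j: "card (U2j j) = (\<Sum>k\<in>{j<..<n}. p^(k - Suc j) * (p - 1) * (p^2)^(n - Suc k))"
     "finite (U2j j)" for j
  proof -
    have "card (U2j j) = (\<Sum>k\<in>{j<..<n}. card (PiS (B2 p n j k)))" unfolding U2j_def
    proof (rule card_UN_disjoint)
      show "\<forall>k\<in>{j<..<n}. finite (PiS (B2 p n j k))" using card_B2(2) by auto
      show "\<forall>k\<in>{j<..<n}. \<forall>k'\<in>{j<..<n}. k \<noteq> k' \<longrightarrow> PiS (B2 p n j k) \<inter> PiS (B2 p n j k') = {}"
      proof (intro ballI impI)
        fix k k' assume k: "k \<in> {j<..<n}" and k': "k' \<in> {j<..<n}" and kk: "k \<noteq> k'"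
        show "PiS (B2 p n j k) \<inter> PiS (B2 p n j k') = {}"
        proof (rule ccontr)
          assume "PiS (B2 p n j k) \<inter> PiS (B2 p n j k') \<noteq> {}"
          then obtain v where v: "v \<in> PiS (B2 p n j k)" "v \<in> PiS (B2 p n j k')" by blast
          from kk consider "k < k'" | "k' < k" by linarith
          then show False
          proof cases
            case 1 then show False using sig_B2(3,4)[OF v(1)] sig_B2(3,4)[OF v(2)] k k' by auto
          next
            case 2 then show False using sig_B2(3,4)[OF v(1)] sig_B2(3,4)[OF v(2)] k k' by auto
          qed
        qed
      qed
    qed simp
    also have "\<dots> = (\<Sum>k\<in>{j<..<n}. p^(k - Suc j) * (p - 1) * (p^2)^(n - Suc k))"
      by (rule sum.cong) (auto simp: card_B2(1))
    finally show "card (U2j j) = (\<Sum>k\<in>{j<..<n}. p^(k - Suc j) * (p - 1) * (p^2)^(n - Suc k))" .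
    show "finite (U2j j)" unfolding U2j_def using card_B2(2) by auto
  qed
  have mem2: "(\<forall>i<j. v i = 0) \<and> v j = v2 1 0" if vU: "v \<in> U2j j" for v j
  proof -
    obtain k where k: "j < k" "v \<in> PiS (B2 p n j k)" using vU unfolding U2j_def by auto
    show ?thesis using sig_B2(1,2)[OF k(2,1)] by simp
  qed
  have cU2: "card U2 = (\<Sum>j<n. \<Sum>k\<in>{j<..<n}. p^(k - Suc j) * (p - 1) * (p^2)^(n - Suc k))" "finite U2"
  proof -
    have "card U2 = (\<Sum>j<n. card (U2j j))" unfolding U2_def
    proof (rule card_UN_disjoint)
      show "\<forall>j\<in>{..<n}. finite (U2j j)" using cU2j(2) by auto
      show "\<forall>j\<in>{..<n}. \<forall>j'\<in>{..<n}. j \<noteq> j' \<longrightarrow> U2j j \<inter> U2j j' = {}"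
      proof (intro ballI impI)
        fix j j' :: nat assume "j \<noteq> j'"
        show "U2j j \<inter> U2j j' = {}"
        proof (rule ccontr)
          assume "U2j j \<inter> U2j j' \<noteq> {}"
          then obtain v where v: "v \<in> U2j j" "v \<in> U2j j'" by blast
          have a: "\<forall>i<j. v i = 0" "v j = v2 1 0" using mem2[OF v(1)] by auto
          have b: "\<forall>i<j'. v i = 0" "v j' = v2 1 0" using mem2[OF v(2)] by auto
          show False using first_eq[OF a b] \<open>j \<noteq> j'\<close> by simp
        qed
      qed
    qed simp
    then show "card U2 = (\<Sum>j<n. \<Sum>k\<in>{j<..<n}. p^(k - Suc j) * (p - 1) * (p^2)^(n - Suc k))"
      using cU2j(1) by simp
    show "finite U2" unfolding U2_def using cU2j(2) by auto
  qed
  have disj: "U1 \<inter> U2 = {}"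
  proof (rule ccontr)
    assume "U1 \<inter> U2 \<noteq> {}"
    then obtain v j j' k where v: "v \<in> PiS (B1 p n j)" "j < n" "v \<in> PiS (B2 p n j' k)" "j' < k" "k < n"
      unfolding U1_def U2_def U2j_def by auto
    have "j = j'" by (rule first_eq[OF sig_B1(1,2)[OF v(1)] sig_B2(1,2)[OF v(3,4)]])
    then show False using sig_B1(3)[OF v(1)] sig_B2(4)[OF v(3,4)] v(4,5) by auto
  qed
  have z: "(\<lambda>i. 0) \<notin> U1 \<union> U2"
  proof
    assume "(\<lambda>i. 0) \<in> U1 \<union> U2"
    then consider (a) j where "(\<lambda>i. 0) \<in> PiS (B1 p n j)" | (b) j where "(\<lambda>i. 0) \<in> U2j j"
      unfolding U1_def U2_def by auto
    then show False
    proof cases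
      case a then show False using sig_B1(2)[OF a] by simp
    next
      case b then show False using mem2[OF b] by simp
    qed
  qed
  have "card (Canon p n) = 1 + card (U1 \<union> U2)"
    unfolding C using z cU1(2) cU2(2) by simp
  also have "card (U1 \<union> U2) = card U1 + card U2"
    by (rule card_Un_disjoint[OF cU1(2) cU2(2) disj])
  finally show ?thesis using cU1(1) cU2(1) by simp
qed


lemma r_eq_card:
  assumes "prime p"
  shows "r p n = card (Canon p n)"
proof -
  have img: "{orbit p v | v. v \<in> configs p n} = orbit p ` Canon p n"
  proof
    show "{orbit p v |v. v \<in> configs p n} \<subseteq> orbit p ` Canon p n"
    proof
      fix X assume "X \<in> {orbit p v |v. v \<in> configs p n}"
      then obtain v where v: "v \<in> configs p n" "X = orbit p v" by blast
      obtain A where A: "A \<in> SL2Z" "act p A v \<in> Canon p n" using exists_canon[OF assms v(1)] by blast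
      have "X = orbit p (act p A v)" using orbit_act[OF v(1) A(1)] v(2) by simp
      then show "X \<in> orbit p ` Canon p n" using A(2) by blast
    qed
    show "orbit p ` Canon p n \<subseteq> {orbit p v |v. v \<in> configs p n}"
      using Canon_configs[OF assms] by blast
  qed
  have inj: "inj_on (orbit p) (Canon p n)"
  proof (rule inj_onI)
    fix c c' assume c: "c \<in> Canon p n" and c': "c' \<in> Canon p n" and e: "orbit p c = orbit p c'"
    have cc': "c' \<in> configs p n" using Canon_configs[OF assms] c' by blast
    have "c' = act p (mat 1) c'" using act_id[OF cc'] by simp
    then have "c' \<in> orbit p c'" unfolding orbit_def using SL2Z_one by blast
    then have "c' \<in> orbit p c" using e by simp
    then obtain A where A: "A \<in> SL2Z" "c' = act p A c" unfolding orbit_def by blast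
    show "c = c'" using canon_unique[OF assms c c' A] by simp
  qed
  show ?thesis unfolding r_def img by (rule card_image[OF inj])
qed

theorem theorem4p3:
  fixes p n :: nat
  assumes "prime p" and "n \<ge> 1"
  shows "real (r p n) =
    (real p ^ (2*n - 1) + real p ^ (n + 1) - real p ^ (n - 1) + real p ^ 2 - real p - 1)
      / (real p ^ 2 - 1)"
proof -
  have p2: "p \<ge> 2" using assms(1) prime_ge_2_nat by blast
  then have q2: "real p \<ge> 2" by simp
  have "real (r p n) = S (real p) n"
    unfolding r_eq_card[OF assms(1)] card_Canon S_def using p2 by (simp add: of_nat_diff)
  also have "\<dots> = (real p ^ (2*n - 1) + real p ^ (n + 1) - real p ^ (n - 1) + real p ^ 2 - real p - 1)
      / (real p ^ 2 - 1)"
  proof (rule S_final)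
    show "real p > 0" using q2 by simp
    have "real p * real p \<ge> 2 * 2" using q2 by (intro mult_mono) auto
    then show "real p ^ 2 \<noteq> 1" by (simp add: power2_eq_square)
    show "n \<ge> 1" by (rule assms(2))
  qed
  finally show ?thesis .
qed

end
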